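(* Consider the Markov chain $X^N$ described in the context, its embedded jump chain $X^{J,N}$, and the random walk $W$ obtained as the jump process of the coordinate process $(X^{J,N}_1(l))_{l\ge 0}$. For any $k$, conditionally on $W(k)\neq 0$ and $W(k)\neq N$, we have $W(k+1)=W(k)+1$ with probability at least $\frac{p_1}{p_1+p_2}$, and $W(k+1)=W(k)-1$ otherwise.
   Context: Learning dynamics: there are $K\ge 2$ arms with Bernoulli reward parameters $1\ge p_1>p_2\ge\cdots\ge p_K\ge 0$, $N$ individuals, Poisson clock rate $\lambda>0$, and $\mu\in(0,1]$. $X^N(t)=(X^N_0(t),\dots,X^N_K(t))$ is the continuous-time Markov chain on nonnegative integer vectors summing to $N$ with $X^N(0)=(N,0,\dots,0)$, which from state $s$ jumps to $s+e^k$ at rate $s_0\lambda(\frac{\mu}{K}+(1-\mu)\frac{s_k}{N})p_k$ for $k=1,\dots,K$, and to $s+e^k-e^{k'}$ at rate $s_{k'}\lambda\frac{s_k}{N}p_k$ for distinct $k,k'\in\{1,\dots,K\}$ ($e^k$ the $k$-th unit vector, coordinates indexed from $0$); no other transitions occur. ($X^N_k(t)$ counts individuals whose memory equals arm $k$; $X^N_0$ counts individuals with no preference.) The jump chain $X^{J,N}(l)$, $l=0,1,2,\dots$, is the sequence of successive distinct states visited by $X^N$, with $X^{J,N}(0)=X^N(0)$. The process $W(k)$, $k=0,1,2,\dots$, is the jump process of the first coordinate $(X^{J,N}_1(l))_{l\ge0}$, i.e., the sequence of successive distinct values taken by $X^{J,N}_1$ (each move of $W$ is $\pm1$), with $W(0)=X^{J,N}_1(0)$.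 *)

theory Defs
  imports "HOL-Probability.Probability"
begin

text \<open>States are vectors s = (s_0,...,s_K) represented as functions nat => nat
  (coordinates above K are irrelevant and stay 0). Unit vector e^k:\<close>

definition unitv :: "nat \<Rightarrow> nat \<Rightarrow> nat" where
  "unitv k = (\<lambda>i. if i = k then 1 else 0)"

text \<open>s + e^k - e^k' (for k' = 0: an individual with no preference adopts arm k).\<close>
definition move :: "(nat \<Rightarrow> nat) \<Rightarrow> nat \<Rightarrow> nat \<Rightarrow> nat \<Rightarrow> nat" where
  "move s k k' = (\<lambda>i. s i + unitv k i - unitv k' i)"

definition rate :: "nat \<Rightarrow> nat \<Rightarrow> real \<Rightarrow> real \<Rightarrow> (nat \<Rightarrow> real)
    \<Rightarrow> (nat \<Rightarrow> nat) \<Rightarrow> (nat \<Rightarrow> nat) \<Rightarrow> real" where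
  "rate N K lam mu p s s' =
     (\<Sum>k\<in>{1..K}. if s' = move s k 0 then
        real (s 0) * lam * (mu / real K + (1 - mu) * real (s k) / real N) * p k else 0)
   + (\<Sum>k\<in>{1..K}. \<Sum>k'\<in>{1..K} - {k}. if s' = move s k k' then
        real (s k') * lam * (real (s k) / real N) * p k else 0)"

definition total_rate :: "nat \<Rightarrow> nat \<Rightarrow> real \<Rightarrow> real \<Rightarrow> (nat \<Rightarrow> real)
    \<Rightarrow> (nat \<Rightarrow> nat) \<Rightarrow> real" where
  "total_rate N K lam mu p s =
     (\<Sum>k\<in>{1..K}. real (s 0) * lam * (mu / real K + (1 - mu) * real (s k) / real N) * p k)
   + (\<Sum>k\<in>{1..K}. \<Sum>k'\<in>{1..K} - {k}. real (s k') * lam * (real (s k) / real N) * p k)"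

definition jump_prob :: "nat \<Rightarrow> nat \<Rightarrow> real \<Rightarrow> real \<Rightarrow> (nat \<Rightarrow> real)
    \<Rightarrow> (nat \<Rightarrow> nat) \<Rightarrow> (nat \<Rightarrow> nat) \<Rightarrow> real" where
  "jump_prob N K lam mu p s s' =
     (if total_rate N K lam mu p s = 0 then (if s' = s then 1 else 0)
      else rate N K lam mu p s s' / total_rate N K lam mu p s)"

definition init_state :: "nat \<Rightarrow> nat \<Rightarrow> nat" where
  "init_state N = (\<lambda>i. if i = 0 then N else 0)"

fun change_time :: "(nat \<Rightarrow> nat \<Rightarrow> nat) \<Rightarrow> nat \<Rightarrow> nat option" where
  "change_time x 0 = Some 0"
| "change_time x (Suc k) =
     (case change_time x k of None \<Rightarrow> None
      | Some t \<Rightarrow> if \<exists>l>t. x l 1 \<noteq> x t 1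
                  then Some (LEAST l. t < l \<and> x l 1 \<noteq> x t 1) else None)"

definition Wproc :: "(nat \<Rightarrow> nat \<Rightarrow> nat) \<Rightarrow> nat \<Rightarrow> nat option" where
  "Wproc x k = map_option (\<lambda>t. x t 1) (change_time x k)"

end

theory Submission
  imports Defs
begin


locale rsetup =
  fixes N K :: nat and lam mu :: real and p :: "nat \<Rightarrow> real"
  assumes K2: "2 \<le> K"
    and p12: "p 2 < p 1"
    and pmono: "\<forall>i j. 2 \<le> i \<longrightarrow> i \<le> j \<longrightarrow> j \<le> K \<longrightarrow> p j \<le> p i"
    and pK: "0 \<le> p K"
    and lam: "0 < lam" and mu: "0 < mu" "mu \<le> 1"
begin

definition SS :: "(nat \<Rightarrow> nat) set" where
  "SS = {s. (\<forall>i>K. s i = 0) \<and> (\<Sum>i\<le>K. s i) = N}"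

definition r0 :: "(nat \<Rightarrow> nat) \<Rightarrow> nat \<Rightarrow> real" where
  "r0 s k = real (s 0) * lam * (mu / real K + (1 - mu) * real (s k) / real N) * p k"
definition r1 :: "(nat \<Rightarrow> nat) \<Rightarrow> nat \<Rightarrow> nat \<Rightarrow> real" where
  "r1 s k k' = real (s k') * lam * (real (s k) / real N) * p k"

abbreviation jp where "jp \<equiv> jump_prob N K lam mu p"
abbreviation tot where "tot \<equiv> total_rate N K lam mu p"

lemma rate_eq: "rate N K lam mu p s s' =
   (\<Sum>k\<in>{1..K}. if s' = move s k 0 then r0 s k else 0)
 + (\<Sum>k\<in>{1..K}. \<Sum>k'\<in>{1..K} - {k}. if s' = move s k k' then r1 s k k' else 0)"
  unfolding rate_def r0_def r1_def by (rule refl)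

lemma tot_eq: "tot s = (\<Sum>k\<in>{1..K}. r0 s k) + (\<Sum>k\<in>{1..K}. \<Sum>k'\<in>{1..K} - {k}. r1 s k k')"
  unfolding total_rate_def r0_def r1_def by (rule refl)

lemma p_nonneg: "k \<in> {1..K} \<Longrightarrow> 0 \<le> p k"
proof -
  assume k: "k \<in> {1..K}"
  have "p K \<le> p 2" using pmono[rule_format, of 2 K] K2 by simp
  show ?thesis
  proof (cases "k = 1")
    case True then show ?thesis using p12 pK \<open>p K \<le> p 2\<close> by simp
  next
    case False then have "p K \<le> p k" using pmono[rule_format, of k K] k by simp
    then show ?thesis using pK by simp
  qed
qed

lemma p_le2: "k \<in> {2..K} \<Longrightarrow> p k \<le> p 2"
  using pmono[rule_format, of 2 k] by simp

lemma r0_nonneg: "k \<in> {1..K} \<Longrightarrow> 0 \<le> r0 s k"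
  unfolding r0_def using p_nonneg[of k] lam mu
  by (intro mult_nonneg_nonneg add_nonneg_nonneg divide_nonneg_nonneg) auto

lemma r1_nonneg: "k \<in> {1..K} \<Longrightarrow> 0 \<le> r1 s k k'"
  unfolding r1_def using p_nonneg[of k] lam
  by (intro mult_nonneg_nonneg divide_nonneg_nonneg) auto

lemma tot_nonneg: "0 \<le> tot s"
  unfolding tot_eq
  by (intro add_nonneg_nonneg sum_nonneg r0_nonneg r1_nonneg) auto

lemma rate_nonneg: "0 \<le> rate N K lam mu p s s'"
  unfolding rate_eq
  by (intro add_nonneg_nonneg sum_nonneg) (auto intro: r0_nonneg r1_nonneg)

lemma jp_nonneg: "0 \<le> jp s s'"
  unfolding jump_prob_def using tot_nonneg rate_nonneg by simp

lemma rate_sum: assumes "finite A"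
  shows "(\<Sum>s'\<in>A. rate N K lam mu p s s') =
   (\<Sum>k\<in>{1..K}. if move s k 0 \<in> A then r0 s k else 0)
 + (\<Sum>k\<in>{1..K}. \<Sum>k'\<in>{1..K} - {k}. if move s k k' \<in> A then r1 s k k' else 0)"
proof -
  have "(\<Sum>s'\<in>A. rate N K lam mu p s s') =
     (\<Sum>s'\<in>A. \<Sum>k\<in>{1..K}. if s' = move s k 0 then r0 s k else 0)
   + (\<Sum>s'\<in>A. \<Sum>k\<in>{1..K}. \<Sum>k'\<in>{1..K} - {k}. if s' = move s k k' then r1 s k k' else 0)"
    unfolding rate_eq by (simp add: sum.distrib)
  also have "(\<Sum>s'\<in>A. \<Sum>k\<in>{1..K}. if s' = move s k 0 then r0 s k else 0)
     = (\<Sum>k\<in>{1..K}. \<Sum>s'\<in>A. if s' = move s k 0 then r0 s k else 0)"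
    by (rule sum.swap)
  also have "\<dots> = (\<Sum>k\<in>{1..K}. if move s k 0 \<in> A then r0 s k else 0)"
    using assms by (simp add: sum.delta)
  also have "(\<Sum>s'\<in>A. \<Sum>k\<in>{1..K}. \<Sum>k'\<in>{1..K} - {k}. if s' = move s k k' then r1 s k k' else 0)
     = (\<Sum>k\<in>{1..K}. \<Sum>s'\<in>A. \<Sum>k'\<in>{1..K} - {k}. if s' = move s k k' then r1 s k k' else 0)"
    by (rule sum.swap)
  also have "\<dots> = (\<Sum>k\<in>{1..K}. \<Sum>k'\<in>{1..K} - {k}. \<Sum>s'\<in>A. if s' = move s k k' then r1 s k k' else 0)"
    by (intro sum.cong refl sum.swap)
  also have "\<dots> = (\<Sum>k\<in>{1..K}. \<Sum>k'\<in>{1..K} - {k}. if move s k k' \<in> A then r1 s k k' else 0)"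
    using assms by (simp add: sum.delta)
  finally show ?thesis .
qed

lemma move1: "move s k k' 1 = s 1 + (if k = 1 then 1 else 0) - (if k' = 1 then 1 else 0)"
  by (simp add: move_def unitv_def)

lemma SS_le: "s \<in> SS \<Longrightarrow> i \<le> K \<Longrightarrow> s i \<le> N"
  unfolding SS_def using member_le_sum[of i "{..K}" s] by auto

lemma finite_SS: "finite SS"
proof -
  have "SS \<subseteq> (\<lambda>f i. if i \<le> K then f i else 0) ` (PiE {..K} (\<lambda>_. {..N}))"
  proof
    fix s assume s: "s \<in> SS"
    have "s = (\<lambda>i. if i \<le> K then (restrict s {..K}) i else 0)"
      using s by (auto simp: SS_def)
    moreover have "restrict s {..K} \<in> PiE {..K} (\<lambda>_. {..N})"
      using SS_le[OF s] by auto
    ultimately show "s \<in> (\<lambda>f i. if i \<le> K then f i else 0) ` (PiE {..K} (\<lambda>_. {..N}))"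
      by blast
  qed
  then show ?thesis by (rule finite_subset) (intro finite_imageI finite_PiE; simp)
qed

lemma init_SS: "init_state N \<in> SS"
  unfolding SS_def init_state_def by (simp add: sum.delta)

lemma move_SS:
  assumes s: "s \<in> SS" and k: "k \<in> {1..K}" and k': "k' \<le> K" "k' \<noteq> k" and pos: "0 < s k'"
  shows "move s k k' \<in> SS"
proof -
  have pt: "int (move s k k' i) = int (s i) + (if i = k then 1 else 0) - (if i = k' then 1 else 0)" for i
    using pos k'(2) by (auto simp: move_def unitv_def)
  have "int (\<Sum>i\<le>K. move s k k' i) = (\<Sum>i\<le>K. int (move s k k' i))" by simp
  also have "\<dots> = (\<Sum>i\<le>K. int (s i)) + (\<Sum>i\<le>K. (if i = k then 1 else 0)) - (\<Sum>i\<le>K. (if i = k' then 1 else 0))"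
    unfolding pt by (simp add: sum.distrib sum_subtractf)
  also have "\<dots> = (\<Sum>i\<le>K. int (s i))" using k k' by (simp add: sum.delta)
  also have "\<dots> = int (\<Sum>i\<le>K. s i)" by simp
  also have "\<dots> = int N" using s unfolding SS_def by simp
  finally have "(\<Sum>i\<le>K. move s k k' i) = N" by linarith
  moreover have "\<forall>i>K. move s k k' i = 0" using s k k' by (auto simp: SS_def move_def unitv_def)
  ultimately show ?thesis by (simp add: SS_def)
qed


lemma r0_move_in: "s \<in> SS \<Longrightarrow> k \<in> {1..K} \<Longrightarrow> r0 s k \<noteq> 0 \<Longrightarrow> move s k 0 \<in> SS"
  by (rule move_SS) (auto simp: r0_def)

lemma r1_move_in: "s \<in> SS \<Longrightarrow> k \<in> {1..K} \<Longrightarrow> k' \<in> {1..K} - {k} \<Longrightarrow> r1 s k k' \<noteq> 0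
   \<Longrightarrow> move s k k' \<in> SS"
  by (rule move_SS) (auto simp: r1_def)

lemma rate_sum_filter: assumes s: "s \<in> SS"
  shows "(\<Sum>s'\<in>{s'\<in>SS. P s'}. rate N K lam mu p s s') =
   (\<Sum>k\<in>{1..K}. if P (move s k 0) then r0 s k else 0)
 + (\<Sum>k\<in>{1..K}. \<Sum>k'\<in>{1..K} - {k}. if P (move s k k') then r1 s k k' else 0)"
proof -
  have fin: "finite {s'\<in>SS. P s'}" using finite_SS by simp
  have e0: "(if move s k 0 \<in> {s'\<in>SS. P s'} then r0 s k else 0) = (if P (move s k 0) then r0 s k else 0)"
    if "k \<in> {1..K}" for k
    using r0_move_in[OF s that] by auto
  have e1: "(if move s k k' \<in> {s'\<in>SS. P s'} then r1 s k k' else 0) = (if P (move s k k') then r1 s k k' else 0)"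
    if "k \<in> {1..K}" "k' \<in> {1..K} - {k}" for k k'
    using r1_move_in[OF s that] by auto
  show ?thesis unfolding rate_sum[OF fin]
    by (intro arg_cong2[where f="(+)"] sum.cong refl e0 e1) auto
qed

lemma sum_rate_SS: "s \<in> SS \<Longrightarrow> (\<Sum>s'\<in>SS. rate N K lam mu p s s') = tot s"
  using rate_sum_filter[of s "\<lambda>_. True"] by (simp add: tot_eq)

lemma jp_row: assumes s: "s \<in> SS" shows "(\<Sum>s'\<in>SS. jp s s') = 1"
proof (cases "tot s = 0")
  case True
  then show ?thesis using s finite_SS by (simp add: jump_prob_def sum.delta)
next
  case False
  then have "(\<Sum>s'\<in>SS. jp s s') = (\<Sum>s'\<in>SS. rate N K lam mu p s s') / tot s"
    by (simp add: jump_prob_def sum_divide_distrib)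
  then show ?thesis using sum_rate_SS[OF s] False by simp
qed

lemma jp_pos_cases: assumes "0 < jp s s'"
  shows "s' 1 = s 1 \<or> s' 1 = Suc (s 1) \<or> s' 1 = s 1 - 1"
proof (cases "tot s = 0")
  case True
  then have "s' = s" using assms by (auto simp: jump_prob_def split: if_splits)
  then show ?thesis by simp
next
  case False
  then have "rate N K lam mu p s s' \<noteq> 0" using assms by (auto simp: jump_prob_def)
  have "(\<exists>k\<in>{1..K}. s' = move s k 0) \<or> (\<exists>k\<in>{1..K}. \<exists>k'\<in>{1..K} - {k}. s' = move s k k')"
  proof (rule ccontr)
    assume nn: "\<not> ?thesis"
    have "(\<Sum>k\<in>{1..K}. if s' = move s k 0 then r0 s k else 0) = 0"
      using nn by (intro sum.neutral) auto
    moreover have "(\<Sum>k\<in>{1..K}. \<Sum>k'\<in>{1..K} - {k}. if s' = move s k k' then r1 s k k' else 0) = 0"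
      using nn by (intro sum.neutral) auto
    ultimately show False using \<open>rate N K lam mu p s s' \<noteq> 0\<close> unfolding rate_eq by simp
  qed
  then show ?thesis by (auto simp: move_def unitv_def split: if_splits)
qed

definition upP where "upP s = (\<Sum>s'\<in>{s'\<in>SS. s' 1 = Suc (s 1)}. jp s s')"
definition dnP where "dnP s = (\<Sum>s'\<in>{s'\<in>SS. s' 1 = s 1 - 1}. jp s s')"
definition stP where "stP s = (\<Sum>s'\<in>{s'\<in>SS. s' 1 = s 1}. jp s s')"
definition upR where "upR s = (\<Sum>s'\<in>{s'\<in>SS. s' 1 = Suc (s 1)}. rate N K lam mu p s s')"
definition dnR where "dnR s = (\<Sum>s'\<in>{s'\<in>SS. s' 1 = s 1 - 1}. rate N K lam mu p s s')"

lemma upP_nonneg: "0 \<le> upP s" unfolding upP_def by (intro sum_nonneg jp_nonneg)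
lemma dnP_nonneg: "0 \<le> dnP s" unfolding dnP_def by (intro sum_nonneg jp_nonneg)
lemma stP_nonneg: "0 \<le> stP s" unfolding stP_def by (intro sum_nonneg jp_nonneg)

lemma split3: assumes s: "s \<in> SS" and pos: "0 < s 1"
  shows "upP s + dnP s + stP s = 1"
proof -
  have pt: "jp s s' = (if s' 1 = Suc (s 1) then jp s s' else 0) + (if s' 1 = s 1 - 1 then jp s s' else 0)
     + (if s' 1 = s 1 then jp s s' else 0)" for s'
  proof (cases "0 < jp s s'")
    case True
    then show ?thesis using jp_pos_cases[OF True] pos by auto
  next
    case False
    then have "jp s s' = 0" using jp_nonneg[of s s'] by simp
    then show ?thesis by simp
  qed
  have "1 = (\<Sum>s'\<in>SS. jp s s')" using jp_row[OF s] by simp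
  also have "\<dots> = (\<Sum>s'\<in>SS. (if s' 1 = Suc (s 1) then jp s s' else 0) + (if s' 1 = s 1 - 1 then jp s s' else 0)
     + (if s' 1 = s 1 then jp s s' else 0))"
    by (rule sum.cong[OF refl pt])
  also have "\<dots> = upP s + dnP s + stP s"
    unfolding upP_def dnP_def stP_def using finite_SS
    by (simp add: sum.distrib sum.inter_filter)
  finally show ?thesis by simp
qed

lemma upP_eq: "tot s \<noteq> 0 \<Longrightarrow> upP s = upR s / tot s"
  unfolding upP_def upR_def jump_prob_def by (simp add: sum_divide_distrib)
lemma dnP_eq: "tot s \<noteq> 0 \<Longrightarrow> dnP s = dnR s / tot s"
  unfolding dnP_def dnR_def jump_prob_def by (simp add: sum_divide_distrib)


lemma p1_pos: "0 < p 1"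
  using p12 p_nonneg[of 2] K2 by simp

lemma p2_nonneg: "0 \<le> p 2"
  using p_nonneg[of 2] K2 by simp

lemma g1_nonneg: "k \<in> {1..K} \<Longrightarrow> 0 \<le> (if P then r1 s k k' else 0)"
  using r1_nonneg[of k s k'] by simp

lemma upR_ge: assumes s: "s \<in> SS"
  shows "r0 s 1 + (\<Sum>k'\<in>{1..K} - {1}. r1 s 1 k') \<le> upR s"
proof -
  let ?g0 = "\<lambda>k. if move s k 0 1 = Suc (s 1) then r0 s k else 0"
  let ?g1 = "\<lambda>k k'. if move s k k' 1 = Suc (s 1) then r1 s k k' else 0"
  have eq: "upR s = (\<Sum>k\<in>{1..K}. ?g0 k) + (\<Sum>k\<in>{1..K}. \<Sum>k'\<in>{1..K} - {k}. ?g1 k k')"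
    unfolding upR_def by (rule rate_sum_filter[OF s])
  have 1: "1 \<in> {1..K}" using K2 by simp
  have "?g0 1 \<le> (\<Sum>k\<in>{1..K}. ?g0 k)"
    by (rule member_le_sum[OF 1]) (auto intro: r0_nonneg)
  moreover have "?g0 1 = r0 s 1" by (simp add: move_def unitv_def)
  moreover have "(\<Sum>k'\<in>{1..K} - {1}. ?g1 1 k') \<le> (\<Sum>k\<in>{1..K}. \<Sum>k'\<in>{1..K} - {k}. ?g1 k k')"
    by (rule member_le_sum[OF 1]) (auto intro!: sum_nonneg g1_nonneg)
  moreover have "(\<Sum>k'\<in>{1..K} - {1}. ?g1 1 k') = (\<Sum>k'\<in>{1..K} - {1}. r1 s 1 k')"
    by (intro sum.cong refl) (auto simp: move_def unitv_def)
  ultimately show ?thesis unfolding eq by linarith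
qed

lemma dnR_le: assumes s: "s \<in> SS" and pos: "0 < s 1"
  shows "dnR s \<le> (\<Sum>k\<in>{1..K} - {1}. r1 s k 1)"
proof -
  let ?g0 = "\<lambda>k. if move s k 0 1 = s 1 - 1 then r0 s k else 0"
  let ?g1 = "\<lambda>k k'. if move s k k' 1 = s 1 - 1 then r1 s k k' else 0"
  have eq: "dnR s = (\<Sum>k\<in>{1..K}. ?g0 k) + (\<Sum>k\<in>{1..K}. \<Sum>k'\<in>{1..K} - {k}. ?g1 k k')"
    unfolding dnR_def by (rule rate_sum_filter[OF s])
  have z: "(\<Sum>k\<in>{1..K}. ?g0 k) = 0"
    using pos by (intro sum.neutral) (auto simp: move_def unitv_def)
  have "(\<Sum>k\<in>{1..K}. \<Sum>k'\<in>{1..K} - {k}. ?g1 k k')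
      \<le> (\<Sum>k\<in>{1..K}. \<Sum>k'\<in>{1..K} - {k}. if k' = 1 then r1 s k 1 else 0)"
  proof (intro sum_mono)
    fix k k' assume k: "k \<in> {1..K}" and k': "k' \<in> {1..K} - {k}"
    show "?g1 k k' \<le> (if k' = 1 then r1 s k 1 else 0)"
      using pos r1_nonneg[OF k, of s k'] by (auto simp: move_def unitv_def)
  qed
  also have "\<dots> = (\<Sum>k\<in>{1..K}. if k \<noteq> 1 then r1 s k 1 else 0)"
    by (intro sum.cong refl) (auto simp: sum.delta')
  also have "\<dots> = (\<Sum>k\<in>{1..K} - {1}. r1 s k 1)"
    by (rule sum.mono_neutral_cong_right) auto
  finally show ?thesis unfolding eq z by simp
qed

lemma ratioR: assumes s: "s \<in> SS" and pos: "0 < s 1"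
  shows "p 1 * dnR s \<le> p 2 * upR s"
proof -
  have "p 1 * dnR s \<le> p 1 * (\<Sum>k\<in>{1..K} - {1}. r1 s k 1)"
    using dnR_le[OF s pos] p1_pos by (simp add: mult_left_mono)
  also have "\<dots> = (\<Sum>k\<in>{1..K} - {1}. p 1 * r1 s k 1)" by (simp add: sum_distrib_left)
  also have "\<dots> \<le> (\<Sum>k\<in>{1..K} - {1}. p 2 * r1 s 1 k)"
  proof (intro sum_mono)
    fix k assume k: "k \<in> {1..K} - {1}"
    then have "p k \<le> p 2" using p_le2[of k] by auto
    moreover have "0 \<le> p 1 * real (s 1) * lam * (real (s k) / real N)"
      using p1_pos lam by simp
    ultimately have "(p 1 * real (s 1) * lam * (real (s k) / real N)) * p k
        \<le> (p 1 * real (s 1) * lam * (real (s k) / real N)) * p 2"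
      by (rule mult_left_mono)
    then show "p 1 * r1 s k 1 \<le> p 2 * r1 s 1 k"
      unfolding r1_def by (simp add: field_simps)
  qed
  also have "\<dots> = p 2 * (\<Sum>k\<in>{1..K} - {1}. r1 s 1 k)" by (simp add: sum_distrib_left)
  also have "\<dots> \<le> p 2 * upR s"
    using upR_ge[OF s] r0_nonneg[of 1 s] K2 p2_nonneg by (intro mult_left_mono) auto
  finally show ?thesis .
qed

lemma upR_le_tot: "s \<in> SS \<Longrightarrow> upR s \<le> tot s"
  unfolding upR_def sum_rate_SS[symmetric]
  using finite_SS by (intro sum_mono2) (auto intro: rate_nonneg)

lemma ratioP: assumes s: "s \<in> SS" and pos: "0 < s 1"
  shows "p 1 * dnP s \<le> p 2 * upP s"
proof (cases "tot s = 0")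
  case True
  have "upP s = 0" "dnP s = 0" using True pos
    by (auto simp: upP_def dnP_def jump_prob_def intro!: sum.neutral)
  then show ?thesis by simp
next
  case False
  then have "0 < tot s" using tot_nonneg[of s] by simp
  have "p 1 * dnR s / tot s \<le> p 2 * upR s / tot s"
    using ratioR[OF s pos] \<open>0 < tot s\<close> by (intro divide_right_mono) auto
  then show ?thesis unfolding upP_eq[OF False] dnP_eq[OF False] by simp
qed

lemma upP_pos: assumes s: "s \<in> SS" and pos: "0 < s 1" and neN: "s 1 \<noteq> N"
  shows "0 < upP s"
proof -
  have le: "s 1 \<le> N" using SS_le[OF s] K2 by simp
  have Npos: "0 < N" using le pos by simp
  have "0 < r0 s 1 + (\<Sum>k'\<in>{1..K} - {1}. r1 s 1 k')"
  proof (cases "s 0 = 0")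
    case False
    have "0 < mu / real K + (1 - mu) * real (s 1) / real N"
      using mu K2 by (intro add_pos_nonneg divide_pos_pos) auto
    then have "0 < r0 s 1" unfolding r0_def using False lam p1_pos by simp
    moreover have "0 \<le> (\<Sum>k'\<in>{1..K} - {1}. r1 s 1 k')"
      using K2 by (intro sum_nonneg r1_nonneg) auto
    ultimately show ?thesis by simp
  next
    case True
    have "{..K} = insert 0 (insert 1 {2..K})" using K2 by auto
    then have "(\<Sum>i\<le>K. s i) = s 0 + (s 1 + (\<Sum>i\<in>{2..K}. s i))" by simp
    then have "s 1 + (\<Sum>i\<in>{2..K}. s i) = N" using s True by (simp add: SS_def)
    then have "(\<Sum>i\<in>{2..K}. s i) \<noteq> 0" using neN by auto
    have "\<exists>i\<in>{2..K}. s i \<noteq> 0"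
    proof (rule ccontr)
      assume "\<not> (\<exists>i\<in>{2..K}. s i \<noteq> 0)"
      then have "(\<Sum>i\<in>{2..K}. s i) = 0" by simp
      then show False using \<open>(\<Sum>i\<in>{2..K}. s i) \<noteq> 0\<close> by simp
    qed
    then obtain i where i: "i \<in> {2..K}" "s i \<noteq> 0" by blast
    have "0 < r1 s 1 i" unfolding r1_def using i lam pos Npos p1_pos by simp
    also have "r1 s 1 i \<le> (\<Sum>k'\<in>{1..K} - {1}. r1 s 1 k')"
      using i K2 by (intro member_le_sum r1_nonneg) auto
    finally show ?thesis using r0_nonneg[of 1 s] K2 by simp
  qed
  then have up: "0 < upR s" using upR_ge[OF s] by linarith
  then have "tot s \<noteq> 0" using upR_le_tot[OF s] by simp
  then show ?thesis unfolding upP_eq[OF \<open>tot s \<noteq> 0\<close>] using up upR_le_tot[OF s] by simp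
qed

end


lemma ct_Suc_eq: "change_time x k = Some t \<Longrightarrow>
  change_time x (Suc k) = (if \<exists>l>t. x l 1 \<noteq> x t 1
                  then Some (LEAST l. t < l \<and> x l 1 \<noteq> x t 1) else None)"
  by (simp only: change_time.simps option.case)

lemma ct_Suc_char:
  assumes t: "change_time x k = Some t"
  shows "change_time x (Suc k) = Some l \<longleftrightarrow>
     t < l \<and> x l 1 \<noteq> x t 1 \<and> (\<forall>j. t \<le> j \<and> j < l \<longrightarrow> x j 1 = x t 1)"
proof
  assume l: "change_time x (Suc k) = Some l"
  have ex: "\<exists>l>t. x l 1 \<noteq> x t 1"
  proof (rule ccontr)
    assume "\<not> (\<exists>l>t. x l 1 \<noteq> x t 1)"
    then have "change_time x (Suc k) = None" unfolding ct_Suc_eq[OF t] by (rule if_not_P)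
    then show False using l by simp
  qed
  have leq: "l = (LEAST l. t < l \<and> x l 1 \<noteq> x t 1)"
    using l unfolding ct_Suc_eq[OF t] if_P[OF ex] by simp
  have P: "t < l \<and> x l 1 \<noteq> x t 1" unfolding leq using ex by (rule LeastI_ex)
  have "x j 1 = x t 1" if "t \<le> j" "j < l" for j
  proof (cases "j = t")
    case False
    then have "t < j" using that by simp
    moreover have "\<not> (t < j \<and> x j 1 \<noteq> x t 1)" using not_less_Least[of j] that(2) unfolding leq by blast
    ultimately show ?thesis by blast
  qed simp
  then show "t < l \<and> x l 1 \<noteq> x t 1 \<and> (\<forall>j. t \<le> j \<and> j < l \<longrightarrow> x j 1 = x t 1)" using P by blast
next
  assume H: "t < l \<and> x l 1 \<noteq> x t 1 \<and> (\<forall>j. t \<le> j \<and> j < l \<longrightarrow> x j 1 = x t 1)"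
  have "(LEAST l. t < l \<and> x l 1 \<noteq> x t 1) = l"
  proof (rule Least_equality)
    show "t < l \<and> x l 1 \<noteq> x t 1" using H by blast
    fix y assume y: "t < y \<and> x y 1 \<noteq> x t 1"
    show "l \<le> y"
    proof (rule ccontr)
      assume "\<not> l \<le> y"
      then have "y < l" by simp
      moreover have "t \<le> y" using y by simp
      ultimately have "x y 1 = x t 1" using H by blast
      then show False using y by simp
    qed
  qed
  moreover have "\<exists>l>t. x l 1 \<noteq> x t 1" using H by blast
  ultimately show "change_time x (Suc k) = Some l" unfolding ct_Suc_eq[OF t] by (simp only: if_True)
qed

lemma ct_Suc_prev: "change_time x (Suc k) = Some l \<Longrightarrow> \<exists>t. change_time x k = Some t"
proof (cases "change_time x k")
  case None
  assume "change_time x (Suc k) = Some l"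
  then show ?thesis using None by simp
qed simp

lemma ct_dep:
  assumes "\<forall>i\<le>n. x i 1 = y i 1"
  shows "change_time x k = Some t \<Longrightarrow> t \<le> n \<Longrightarrow> change_time y k = Some t"
proof (induction k arbitrary: t)
  case 0
  then show ?case by simp
next
  case (Suc k)
  obtain t0 where t0: "change_time x k = Some t0" using ct_Suc_prev[OF Suc.prems(1)] by blast
  have H: "t0 < t \<and> x t 1 \<noteq> x t0 1 \<and> (\<forall>j. t0 \<le> j \<and> j < t \<longrightarrow> x j 1 = x t0 1)"
    using Suc.prems(1) ct_Suc_char[OF t0] by blast
  have "t0 < t" using H by blast
  then have y0: "change_time y k = Some t0" using Suc.IH[OF t0] Suc.prems(2) by simp
  have ag: "y j 1 = x j 1" if "j \<le> t" for j using assms Suc.prems(2) that by simp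
  have "t0 < t \<and> y t 1 \<noteq> y t0 1 \<and> (\<forall>j. t0 \<le> j \<and> j < t \<longrightarrow> y j 1 = y t0 1)"
  proof (intro conjI allI impI)
    show "t0 < t" using H by blast
    have "x t 1 \<noteq> x t0 1" using H by blast
    then show "y t 1 \<noteq> y t0 1" using ag[of t] ag[of t0] \<open>t0 < t\<close> by simp
    fix j assume j: "t0 \<le> j \<and> j < t"
    then have "x j 1 = x t0 1" using H by blast
    then show "y j 1 = y t0 1" using j ag[of j] ag[of t0] by simp
  qed
  then show ?case using ct_Suc_char[OF y0] by blast
qed

definition dep :: "nat \<Rightarrow> ((nat \<Rightarrow> nat \<Rightarrow> nat) \<Rightarrow> bool) \<Rightarrow> bool" where
  "dep n Q = (\<forall>x y. (\<forall>i\<le>n. x i 1 = y i 1) \<longrightarrow> Q x = Q y)"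

lemma dep_mono: "dep n Q \<Longrightarrow> n \<le> n' \<Longrightarrow> dep n' Q"
  unfolding dep_def by auto


locale psetup = rsetup N K lam mu p + prob_space M
  for N K :: nat and lam mu :: real and p :: "nat \<Rightarrow> real" and M :: "'w measure" +
  fixes X :: "nat \<Rightarrow> 'w \<Rightarrow> (nat \<Rightarrow> nat)" and k :: nat
  assumes Xmeas: "\<forall>n. X n \<in> measurable M (count_space UNIV)"
    and Xlaw: "\<forall>n (xs :: nat \<Rightarrow> nat \<Rightarrow> nat).
       measure M {\<omega> \<in> space M. \<forall>i\<le>n. X i \<omega> = xs i}
       = (if xs 0 = init_state N then 1 else 0)
         * (\<Prod>i<n. jump_prob N K lam mu p (xs i) (xs (Suc i)))"
begin

definition Cyl where "Cyl n xs = {\<omega>\<in>space M. \<forall>i\<le>n. X i \<omega> = xs i}"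
definition Good where "Good n = {\<omega>\<in>space M. \<forall>i\<le>n. X i \<omega> \<in> SS}"
definition wt where "wt n xs = (if xs 0 = init_state N then 1 else 0) * (\<Prod>i<n. jp (xs i) (xs (Suc i)))"

lemma wt_nonneg: "0 \<le> wt n xs"
  unfolding wt_def by (auto intro!: prod_nonneg jp_nonneg)

lemma Xpre: "X i -` A \<inter> space M \<in> sets M"
  using Xmeas measurable_sets[of "X i" M "count_space UNIV" A] by auto

lemma Cyl_sets: "Cyl n xs \<in> sets M"
proof -
  have "Cyl n xs = (\<Inter>i\<in>{..n}. X i -` {xs i} \<inter> space M)"
    unfolding Cyl_def by auto
  also have "\<dots> \<in> sets M" by (intro sets.finite_INT Xpre) auto
  finally show ?thesis .
qed

lemma P_Cyl: "prob (Cyl n xs) = wt n xs"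
  using Xlaw unfolding Cyl_def wt_def by blast

lemma wt_Suc: "wt (Suc n) (xs(Suc n := s)) = wt n xs * jp (xs n) s"
proof -
  have "(\<Prod>i<n. jp ((xs(Suc n := s)) i) ((xs(Suc n := s)) (Suc i))) = (\<Prod>i<n. jp (xs i) (xs (Suc i)))"
    by (intro prod.cong refl) auto
  then show ?thesis unfolding wt_def by (simp add: prod.lessThan_Suc)
qed

lemma PiE_neq: "xs \<in> PiE {..n} A \<Longrightarrow> ys \<in> PiE {..n} A \<Longrightarrow> xs \<noteq> ys \<Longrightarrow> \<exists>i\<le>n. xs i \<noteq> ys i"
  by (metis PiE_E atMost_iff extensionalityI PiE_iff)

lemma Good_prob: "prob (Good n) = (\<Sum>xs\<in>PiE {..n} (\<lambda>_. SS). wt n xs)"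
proof -
  have eq: "Good n = (\<Union>xs\<in>PiE {..n} (\<lambda>_. SS). Cyl n xs)"
  proof
    show "Good n \<subseteq> (\<Union>xs\<in>PiE {..n} (\<lambda>_. SS). Cyl n xs)"
    proof
      fix \<omega> assume w: "\<omega> \<in> Good n"
      then have "restrict (\<lambda>i. X i \<omega>) {..n} \<in> PiE {..n} (\<lambda>_. SS)" by (auto simp: Good_def)
      moreover have "\<omega> \<in> Cyl n (restrict (\<lambda>i. X i \<omega>) {..n})" using w by (auto simp: Good_def Cyl_def)
      ultimately show "\<omega> \<in> (\<Union>xs\<in>PiE {..n} (\<lambda>_. SS). Cyl n xs)" by blast
    qed
  next
    show "(\<Union>xs\<in>PiE {..n} (\<lambda>_. SS). Cyl n xs) \<subseteq> Good n"
    proof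
      fix \<omega> assume "\<omega> \<in> (\<Union>xs\<in>PiE {..n} (\<lambda>_. SS). Cyl n xs)"
      then obtain xs where xs: "xs \<in> PiE {..n} (\<lambda>_. SS)" "\<omega> \<in> Cyl n xs" by blast
      have "X i \<omega> \<in> SS" if "i \<le> n" for i
        using xs that PiE_mem[OF xs(1), of i] unfolding Cyl_def by simp
      then show "\<omega> \<in> Good n" using xs(2) unfolding Good_def Cyl_def by blast
    qed
  qed
  have "prob (Good n) = prob (\<Union>xs\<in>PiE {..n} (\<lambda>_. SS). Cyl n xs)" by (simp only: eq)
  also have "\<dots> = (\<Sum>xs\<in>PiE {..n} (\<lambda>_. SS). prob (Cyl n xs))"
  proof (rule finite_measure_finite_Union)
    show "finite (PiE {..n} (\<lambda>_. SS))" using finite_SS by (intro finite_PiE) auto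
    show "Cyl n ` PiE {..n} (\<lambda>_. SS) \<subseteq> events" using Cyl_sets by auto
    show "disjoint_family_on (Cyl n) (PiE {..n} (\<lambda>_. SS))"
    proof (unfold disjoint_family_on_def, intro ballI impI)
      fix xs ys assume "xs \<in> PiE {..n} (\<lambda>_. SS)" "ys \<in> PiE {..n} (\<lambda>_. SS)" "xs \<noteq> ys"
      then obtain i where "i \<le> n" "xs i \<noteq> ys i" using PiE_neq by blast
      then show "Cyl n xs \<inter> Cyl n ys = {}" unfolding Cyl_def by auto
    qed
  qed
  also have "\<dots> = (\<Sum>xs\<in>PiE {..n} (\<lambda>_. SS). wt n xs)" by (simp only: P_Cyl)
  finally show ?thesis .
qed


lemma depD: "dep n Q \<Longrightarrow> (\<And>i. i \<le> n \<Longrightarrow> x i 1 = y i 1) \<Longrightarrow> Q x = Q y"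
  unfolding dep_def by blast

lemma Good_sets: "Good n \<in> sets M"
proof -
  have "Good n = (\<Inter>i\<in>{..n}. X i -` SS \<inter> space M)"
    unfolding Good_def by auto
  also have "\<dots> \<in> sets M" by (intro sets.finite_INT Xpre) auto
  finally show ?thesis .
qed

lemma Dprime:
  assumes dQ: "dep n Q"
  shows "prob {\<omega>\<in>space M. (\<forall>i\<le>Suc n. X i \<omega> \<in> SS) \<and> Q (\<lambda>l. X l \<omega>) \<and> R (X n \<omega>) (X (Suc n) \<omega>)}
    = (\<Sum>xs\<in>{xs\<in>PiE {..n} (\<lambda>_. SS). Q xs}. wt n xs * (\<Sum>s\<in>{s\<in>SS. R (xs n) s}. jp (xs n) s))"
proof -
  define F where "F = {xs\<in>PiE {..n} (\<lambda>_. SS). Q xs}"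
  define T where "T xs = {s\<in>SS. R (xs n) s}" for xs :: "nat \<Rightarrow> nat \<Rightarrow> nat"
  define B where "B xs s = Cyl (Suc n) (xs(Suc n := s))" for xs s
  have finF: "finite F"
  proof (rule finite_subset)
    show "F \<subseteq> PiE {..n} (\<lambda>_. SS)" unfolding F_def by auto
    show "finite (PiE {..n} (\<lambda>_. SS))" using finite_SS by (intro finite_PiE) auto
  qed
  have finT: "finite (T xs)" for xs unfolding T_def using finite_SS by simp
  have Bsets: "B xs s \<in> sets M" for xs s unfolding B_def by (rule Cyl_sets)
  let ?E = "{\<omega>\<in>space M. (\<forall>i\<le>Suc n. X i \<omega> \<in> SS) \<and> Q (\<lambda>l. X l \<omega>) \<and> R (X n \<omega>) (X (Suc n) \<omega>)}"
  have eq: "?E = (\<Union>xs\<in>F. \<Union>s\<in>T xs. B xs s)"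
  proof
    show "?E \<subseteq> (\<Union>xs\<in>F. \<Union>s\<in>T xs. B xs s)"
    proof
      fix \<omega> assume w: "\<omega> \<in> ?E"
      define xs where "xs = restrict (\<lambda>i. X i \<omega>) {..n}"
      have wS: "X i \<omega> \<in> SS" if "i \<le> Suc n" for i using w that by blast
      have "xs \<in> PiE {..n} (\<lambda>_. SS)" unfolding xs_def restrict_PiE_iff using wS by simp
      moreover have "Q xs = Q (\<lambda>l. X l \<omega>)"
        by (rule depD[OF dQ]) (simp add: xs_def)
      ultimately have xF: "xs \<in> F" unfolding F_def using w by blast
      have xn: "xs n = X n \<omega>" unfolding xs_def by simp
      have sT: "X (Suc n) \<omega> \<in> T xs" unfolding T_def xn using w by blast
      have "\<forall>i\<le>Suc n. X i \<omega> = (xs(Suc n := X (Suc n) \<omega>)) i"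
      proof (intro allI impI)
        fix i assume i: "i \<le> Suc n"
        show "X i \<omega> = (xs(Suc n := X (Suc n) \<omega>)) i"
        proof (cases "i = Suc n")
          case False then have "i \<le> n" using i by simp
          then show ?thesis using False by (simp add: xs_def)
        qed simp
      qed
      then have "\<omega> \<in> B xs (X (Suc n) \<omega>)"
        unfolding B_def Cyl_def using w by blast
      then show "\<omega> \<in> (\<Union>xs\<in>F. \<Union>s\<in>T xs. B xs s)" using xF sT by blast
    qed
  next
    show "(\<Union>xs\<in>F. \<Union>s\<in>T xs. B xs s) \<subseteq> ?E"
    proof
      fix \<omega> assume "\<omega> \<in> (\<Union>xs\<in>F. \<Union>s\<in>T xs. B xs s)"
      then obtain xs s where xF: "xs \<in> F" and sT: "s \<in> T xs" and wB: "\<omega> \<in> B xs s" by blast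
      have sp: "\<omega> \<in> space M" using wB unfolding B_def Cyl_def by blast
      have wB': "\<forall>i\<le>Suc n. X i \<omega> = (xs(Suc n := s)) i" using wB unfolding B_def Cyl_def by blast
      have Xi: "X i \<omega> = xs i" if "i \<le> n" for i
      proof -
        have "X i \<omega> = (xs(Suc n := s)) i" using wB' that by simp
        then show ?thesis using that by simp
      qed
      have XS: "X (Suc n) \<omega> = s" using wB'[rule_format, of "Suc n"] by simp
      have xP: "xs \<in> PiE {..n} (\<lambda>_. SS)" and Qx: "Q xs" using xF unfolding F_def by auto
      have "X i \<omega> \<in> SS" if "i \<le> Suc n" for i
      proof (cases "i = Suc n")
        case True then show ?thesis using XS sT unfolding T_def by simp
      next
        case False then have "i \<le> n" using that by simp
        then show ?thesis using Xi[of i] PiE_mem[OF xP, of i] by simp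
      qed
      moreover have "Q (\<lambda>l. X l \<omega>)"
      proof -
        have "Q (\<lambda>l. X l \<omega>) = Q xs" by (rule depD[OF dQ]) (simp add: Xi)
        then show ?thesis using Qx by simp
      qed
      moreover have "R (X n \<omega>) (X (Suc n) \<omega>)" using sT XS Xi[of n] unfolding T_def by simp
      ultimately show "\<omega> \<in> ?E" using sp by blast
    qed
  qed
  have "prob ?E = (\<Sum>xs\<in>F. prob (\<Union>s\<in>T xs. B xs s))"
    unfolding eq
  proof (rule finite_measure_finite_Union[OF finF])
    show "(\<lambda>xs. \<Union>s\<in>T xs. B xs s) ` F \<subseteq> events"
    proof
      fix A assume "A \<in> (\<lambda>xs. \<Union>s\<in>T xs. B xs s) ` F"
      then obtain xs where "A = (\<Union>s\<in>T xs. B xs s)" by blast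
      then show "A \<in> events" using sets.finite_UN[OF finT Bsets] by simp
    qed
    show "disjoint_family_on (\<lambda>xs. \<Union>s\<in>T xs. B xs s) F"
    proof (unfold disjoint_family_on_def, intro ballI impI)
      fix xs ys assume xsF: "xs \<in> F" and ysF: "ys \<in> F" and ne: "xs \<noteq> ys"
      have "xs \<in> PiE {..n} (\<lambda>_. SS)" "ys \<in> PiE {..n} (\<lambda>_. SS)" using xsF ysF unfolding F_def by simp_all
      from PiE_neq[OF this ne] obtain i where i: "i \<le> n" "xs i \<noteq> ys i" by blast
      show "(\<Union>s\<in>T xs. B xs s) \<inter> (\<Union>s\<in>T ys. B ys s) = {}"
      proof (rule ccontr)
        assume "(\<Union>s\<in>T xs. B xs s) \<inter> (\<Union>s\<in>T ys. B ys s) \<noteq> {}"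
        then obtain \<omega> s s' where w1: "\<omega> \<in> B xs s" and w2: "\<omega> \<in> B ys s'" by blast
        have a1: "\<forall>i\<le>Suc n. X i \<omega> = (xs(Suc n := s)) i" using w1 unfolding B_def Cyl_def by blast
        have a2: "\<forall>i\<le>Suc n. X i \<omega> = (ys(Suc n := s')) i" using w2 unfolding B_def Cyl_def by blast
        have ile: "i \<le> Suc n" "i \<noteq> Suc n" using i(1) by simp_all
        have "X i \<omega> = xs i" using a1[rule_format, OF ile(1)] ile(2) by simp
        moreover have "X i \<omega> = ys i" using a2[rule_format, OF ile(1)] ile(2) by simp
        ultimately show False using i(2) by simp
      qed
    qed
  qed
  also have "\<dots> = (\<Sum>xs\<in>F. \<Sum>s\<in>T xs. prob (B xs s))"
  proof (rule sum.cong[OF refl])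
    fix xs assume "xs \<in> F"
    show "prob (\<Union>s\<in>T xs. B xs s) = (\<Sum>s\<in>T xs. prob (B xs s))"
    proof (rule finite_measure_finite_Union[OF finT])
      show "B xs ` T xs \<subseteq> events" using Bsets by blast
      show "disjoint_family_on (B xs) (T xs)"
      proof (unfold disjoint_family_on_def, intro ballI impI)
        fix s s' assume "s \<in> T xs" "s' \<in> T xs" "s \<noteq> s'"
        show "B xs s \<inter> B xs s' = {}"
        proof (rule ccontr)
          assume "B xs s \<inter> B xs s' \<noteq> {}"
          then obtain \<omega> where w1: "\<omega> \<in> B xs s" and w2: "\<omega> \<in> B xs s'" by blast
          have a1: "\<forall>i\<le>Suc n. X i \<omega> = (xs(Suc n := s)) i" using w1 unfolding B_def Cyl_def by blast
          have a2: "\<forall>i\<le>Suc n. X i \<omega> = (xs(Suc n := s')) i" using w2 unfolding B_def Cyl_def by blast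
          have "X (Suc n) \<omega> = s" using a1[rule_format, of "Suc n"] by simp
          moreover have "X (Suc n) \<omega> = s'" using a2[rule_format, of "Suc n"] by simp
          ultimately have "X (Suc n) \<omega> = s" "X (Suc n) \<omega> = s'" by simp_all
          then show False using \<open>s \<noteq> s'\<close> by simp
        qed
      qed
    qed
  qed
  also have "\<dots> = (\<Sum>xs\<in>F. wt n xs * (\<Sum>s\<in>T xs. jp (xs n) s))"
  proof (rule sum.cong[OF refl])
    fix xs assume "xs \<in> F"
    have "(\<Sum>s\<in>T xs. prob (B xs s)) = (\<Sum>s\<in>T xs. wt n xs * jp (xs n) s)"
      unfolding B_def P_Cyl wt_Suc by (rule refl)
    also have "\<dots> = wt n xs * (\<Sum>s\<in>T xs. jp (xs n) s)" by (rule sum_distrib_left[symmetric])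
    finally show "(\<Sum>s\<in>T xs. prob (B xs s)) = wt n xs * (\<Sum>s\<in>T xs. jp (xs n) s)" .
  qed
  finally show ?thesis unfolding F_def T_def .
qed

lemma Good_one: "prob (Good n) = 1"
proof (induction n)
  case 0
  have "Cyl 0 (\<lambda>_. init_state N) \<subseteq> Good 0" unfolding Cyl_def Good_def using init_SS by auto
  then have "prob (Cyl 0 (\<lambda>_. init_state N)) \<le> prob (Good 0)"
    by (intro finite_measure_mono Good_sets)
  moreover have "prob (Cyl 0 (\<lambda>_. init_state N)) = 1" unfolding P_Cyl wt_def by simp
  ultimately show ?case using prob_le_1[of "Good 0"] by simp
next
  case (Suc n)
  have d: "dep n (\<lambda>_. True)" unfolding dep_def by simp
  have "Good (Suc n) = {\<omega>\<in>space M. (\<forall>i\<le>Suc n. X i \<omega> \<in> SS) \<and> (\<lambda>_. True) (\<lambda>l. X l \<omega>)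
        \<and> (\<lambda>_ _. True) (X n \<omega>) (X (Suc n) \<omega>)}" unfolding Good_def by simp
  then have "prob (Good (Suc n)) = (\<Sum>xs\<in>{xs\<in>PiE {..n} (\<lambda>_. SS). True}. wt n xs * (\<Sum>s\<in>{s\<in>SS. True}. jp (xs n) s))"
    using Dprime[OF d, of "\<lambda>_ _. True"] by simp
  also have "\<dots> = (\<Sum>xs\<in>PiE {..n} (\<lambda>_. SS). wt n xs)"
  proof (intro sum.cong)
    fix xs assume "xs \<in> PiE {..n} (\<lambda>_. SS)"
    then have "xs n \<in> SS" by auto
    then show "wt n xs * (\<Sum>s\<in>{s\<in>SS. True}. jp (xs n) s) = wt n xs" using jp_row by simp
  qed simp
  also have "\<dots> = 1" using Good_prob Suc.IH by simp
  finally show ?case .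
qed

lemma prob_Good: assumes A: "A \<in> events" shows "prob A = prob (A \<inter> Good n)"
proof -
  have "prob (A \<inter> Good n) \<le> prob A" using A by (intro finite_measure_mono) auto
  moreover have "prob A \<le> prob ((A \<inter> Good n) \<union> (space M - Good n))"
    using A sets.sets_into_space[OF A] Good_sets by (intro finite_measure_mono) auto
  moreover have "prob ((A \<inter> Good n) \<union> (space M - Good n)) \<le> prob (A \<inter> Good n) + prob (space M - Good n)"
    using A Good_sets by (intro measure_subadditive) (auto simp: emeasure_finite)
  moreover have "prob (space M - Good n) = 0" using prob_compl[OF Good_sets] Good_one by simp
  ultimately show ?thesis by linarith
qed

lemma dep_sets: assumes dQ: "dep n Q" shows "{\<omega>\<in>space M. Q (\<lambda>l. X l \<omega>)} \<in> events"
proof -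
  define C where "C v = {\<omega>\<in>space M. \<forall>i\<le>n. X i \<omega> 1 = v i}" for v :: "nat \<Rightarrow> nat"
  have Cs: "C v \<in> events" for v
  proof -
    have "C v = (\<Inter>i\<in>{..n}. X i -` {f. f 1 = v i} \<inter> space M)" unfolding C_def by blast
    also have "\<dots> \<in> sets M" by (intro sets.finite_INT Xpre) auto
    finally show ?thesis .
  qed
  define V where "V = {v\<in>PiE {..n} (\<lambda>_. UNIV::nat set). Q (\<lambda>i j. v i)}"
  have cV: "countable V"
  proof (rule countable_subset)
    show "V \<subseteq> PiE {..n} (\<lambda>_. UNIV::nat set)" unfolding V_def by blast
    show "countable (PiE {..n} (\<lambda>_. UNIV::nat set))" by (intro countable_PiE) auto
  qed
  have eq: "{\<omega>\<in>space M. Q (\<lambda>l. X l \<omega>)} = (\<Union>v\<in>V. C v)"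
  proof
    show "{\<omega>\<in>space M. Q (\<lambda>l. X l \<omega>)} \<subseteq> (\<Union>v\<in>V. C v)"
    proof
      fix \<omega> assume w: "\<omega> \<in> {\<omega>\<in>space M. Q (\<lambda>l. X l \<omega>)}"
      define v where "v = restrict (\<lambda>i. X i \<omega> 1) {..n}"
      have vi: "v i = X i \<omega> 1" if "i \<le> n" for i unfolding v_def using that by simp
      have "Q (\<lambda>i j. v i) = Q (\<lambda>l. X l \<omega>)"
        by (rule depD[OF dQ]) (simp add: vi)
      moreover have "v \<in> PiE {..n} (\<lambda>_. UNIV::nat set)" unfolding v_def by simp
      ultimately have "v \<in> V" using w unfolding V_def by blast
      moreover have "\<omega> \<in> C v" using w vi unfolding C_def by simp
      ultimately show "\<omega> \<in> (\<Union>v\<in>V. C v)" by blast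
    qed
  next
    show "(\<Union>v\<in>V. C v) \<subseteq> {\<omega>\<in>space M. Q (\<lambda>l. X l \<omega>)}"
    proof
      fix \<omega> assume "\<omega> \<in> (\<Union>v\<in>V. C v)"
      then obtain v where v: "v \<in> V" "\<omega> \<in> C v" by blast
      have vi: "v i = X i \<omega> 1" if "i \<le> n" for i using v(2) that unfolding C_def by simp
      have "Q (\<lambda>i j. v i) = Q (\<lambda>l. X l \<omega>)" by (rule depD[OF dQ]) (simp add: vi)
      moreover have "Q (\<lambda>i j. v i)" using v(1) unfolding V_def by blast
      moreover have "\<omega> \<in> space M" using v(2) unfolding C_def by blast
      ultimately show "\<omega> \<in> {\<omega>\<in>space M. Q (\<lambda>l. X l \<omega>)}" by simp
    qed
  qed
  show ?thesis unfolding eq by (intro sets.countable_UN'' cV Cs)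
qed

end


context psetup
begin

definition Wait where "Wait t m x = (change_time x k = Some t \<and> x t 1 \<noteq> 0 \<and> x t 1 \<noteq> N
    \<and> (\<forall>j. t \<le> j \<and> j \<le> t + m \<longrightarrow> x j 1 = x t 1))"
definition Up where "Up t m x = (Wait t m x \<and> x (Suc (t + m)) 1 = Suc (x (t + m) 1))"
definition Dn where "Dn t m x = (Wait t m x \<and> x (Suc (t + m)) 1 = x (t + m) 1 - 1)"

lemma Wait_val: "Wait t m x \<Longrightarrow> t \<le> j \<Longrightarrow> j \<le> t + m \<Longrightarrow> x j 1 = x t 1"
  unfolding Wait_def by blast

lemma Wait_ct: "Wait t m x \<Longrightarrow> change_time x k = Some t"
  unfolding Wait_def by blast

lemma Wait_nz: "Wait t m x \<Longrightarrow> x t 1 \<noteq> 0 \<and> x t 1 \<noteq> N"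
  unfolding Wait_def by blast

lemma Wait_intro: "change_time x k = Some t \<Longrightarrow> x t 1 \<noteq> 0 \<Longrightarrow> x t 1 \<noteq> N
   \<Longrightarrow> (\<And>j. t \<le> j \<Longrightarrow> j \<le> t + m \<Longrightarrow> x j 1 = x t 1) \<Longrightarrow> Wait t m x"
  unfolding Wait_def by blast

lemma Wait_Suc: "Wait t (Suc m) x = (Wait t m x \<and> x (Suc (t + m)) 1 = x (t + m) 1)"
proof
  assume W: "Wait t (Suc m) x"
  have "Wait t m x"
    by (rule Wait_intro[OF Wait_ct[OF W] conjunct1[OF Wait_nz[OF W]] conjunct2[OF Wait_nz[OF W]]])
       (rule Wait_val[OF W]; simp)
  moreover have "x (Suc (t + m)) 1 = x t 1" by (rule Wait_val[OF W]) simp_all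
  moreover have "x (t + m) 1 = x t 1" by (rule Wait_val[OF W]) simp_all
  ultimately show "Wait t m x \<and> x (Suc (t + m)) 1 = x (t + m) 1" by simp
next
  assume H: "Wait t m x \<and> x (Suc (t + m)) 1 = x (t + m) 1"
  then have W: "Wait t m x" and e: "x (Suc (t + m)) 1 = x (t + m) 1" by simp_all
  have e2: "x (t + m) 1 = x t 1" by (rule Wait_val[OF W]) simp_all
  show "Wait t (Suc m) x"
  proof (rule Wait_intro[OF Wait_ct[OF W] conjunct1[OF Wait_nz[OF W]] conjunct2[OF Wait_nz[OF W]]])
    fix j assume j: "t \<le> j" "j \<le> t + Suc m"
    show "x j 1 = x t 1"
    proof (cases "j = Suc (t + m)")
      case True then show ?thesis using e e2 by simp
    next
      case False then have "j \<le> t + m" using j by simp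
      then show ?thesis using Wait_val[OF W j(1)] by simp
    qed
  qed
qed

lemma Wait_dep1: assumes ag: "\<forall>i\<le>t + m. x i 1 = y i 1" and W: "Wait t m x" shows "Wait t m y"
proof -
  have ct: "change_time y k = Some t" using ct_dep[where n="t+m" and x=x and y=y, OF ag Wait_ct[OF W]] by simp
  have yt: "y t 1 = x t 1" using ag by simp
  show ?thesis
  proof (rule Wait_intro[OF ct])
    show "y t 1 \<noteq> 0" "y t 1 \<noteq> N" using Wait_nz[OF W] yt by simp_all
    fix j assume j: "t \<le> j" "j \<le> t + m"
    have "y j 1 = x j 1" using ag j(2) by simp
    then show "y j 1 = y t 1" using Wait_val[OF W j] yt by simp
  qed
qed

lemma dep_Wait: "dep (t + m) (Wait t m)"
  unfolding dep_def
proof (intro allI impI)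
  fix x y :: "nat \<Rightarrow> nat \<Rightarrow> nat" assume ag: "\<forall>i\<le>t + m. x i 1 = y i 1"
  then have ag': "\<forall>i\<le>t + m. y i 1 = x i 1" by simp
  show "Wait t m x = Wait t m y" using Wait_dep1[where x=x and y=y, OF ag] Wait_dep1[where x=y and y=x, OF ag'] by blast
qed

lemma dep_Up: "dep (Suc (t + m)) (Up t m)"
  unfolding dep_def
proof (intro allI impI)
  fix x y :: "nat \<Rightarrow> nat \<Rightarrow> nat" assume ag: "\<forall>i\<le>Suc (t + m). x i 1 = y i 1"
  have "Wait t m x = Wait t m y" by (rule depD[OF dep_Wait]) (use ag in simp)
  moreover have "x (Suc (t + m)) 1 = y (Suc (t + m)) 1" "x (t + m) 1 = y (t + m) 1" using ag by simp_all
  ultimately show "Up t m x = Up t m y" unfolding Up_def by simp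
qed

lemma dep_Dn: "dep (Suc (t + m)) (Dn t m)"
  unfolding dep_def
proof (intro allI impI)
  fix x y :: "nat \<Rightarrow> nat \<Rightarrow> nat" assume ag: "\<forall>i\<le>Suc (t + m). x i 1 = y i 1"
  have "Wait t m x = Wait t m y" by (rule depD[OF dep_Wait]) (use ag in simp)
  moreover have "x (Suc (t + m)) 1 = y (Suc (t + m)) 1" "x (t + m) 1 = y (t + m) 1" using ag by simp_all
  ultimately show "Dn t m x = Dn t m y" unfolding Dn_def by simp
qed

definition EW where "EW t m = {\<omega>\<in>space M. Wait t m (\<lambda>l. X l \<omega>)}"
definition EU where "EU t m = {\<omega>\<in>space M. Up t m (\<lambda>l. X l \<omega>)}"
definition ED where "ED t m = {\<omega>\<in>space M. Dn t m (\<lambda>l. X l \<omega>)}"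

lemma EW_sets: "EW t m \<in> events" unfolding EW_def by (rule dep_sets[OF dep_Wait])
lemma EU_sets: "EU t m \<in> events" unfolding EU_def by (rule dep_sets[OF dep_Up])
lemma ED_sets: "ED t m \<in> events" unfolding ED_def by (rule dep_sets[OF dep_Dn])

definition FF where "FF t m = {xs\<in>PiE {..t + m} (\<lambda>_. SS). Wait t m xs}"

lemma PR:
  assumes S: "{\<omega>\<in>space M. Wait t m (\<lambda>l. X l \<omega>) \<and> R (X (t + m) \<omega>) (X (Suc (t + m)) \<omega>)} \<in> events"
  shows "prob {\<omega>\<in>space M. Wait t m (\<lambda>l. X l \<omega>) \<and> R (X (t + m) \<omega>) (X (Suc (t + m)) \<omega>)}
    = (\<Sum>xs\<in>FF t m. wt (t + m) xs * (\<Sum>s\<in>{s\<in>SS. R (xs (t + m)) s}. jp (xs (t + m)) s))"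
proof -
  let ?A = "{\<omega>\<in>space M. Wait t m (\<lambda>l. X l \<omega>) \<and> R (X (t + m) \<omega>) (X (Suc (t + m)) \<omega>)}"
  have "?A \<inter> Good (Suc (t + m)) = {\<omega>\<in>space M. (\<forall>i\<le>Suc (t + m). X i \<omega> \<in> SS) \<and> Wait t m (\<lambda>l. X l \<omega>)
      \<and> R (X (t + m) \<omega>) (X (Suc (t + m)) \<omega>)}"
    unfolding Good_def by blast
  then show ?thesis using prob_Good[OF S, of "Suc (t + m)"] Dprime[OF dep_Wait, where R=R]
    unfolding FF_def by simp
qed

lemma FF_props: assumes "xs \<in> FF t m"
  shows "xs (t + m) \<in> SS" "xs (t + m) 1 \<noteq> 0" "xs (t + m) 1 \<noteq> N"
proof -
  have P: "xs \<in> PiE {..t + m} (\<lambda>_. SS)" and W: "Wait t m xs" using assms unfolding FF_def by simp_all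
  show "xs (t + m) \<in> SS" using P by auto
  have "xs (t + m) 1 = xs t 1" by (rule Wait_val[OF W]) simp_all
  then show "xs (t + m) 1 \<noteq> 0" "xs (t + m) 1 \<noteq> N" using Wait_nz[OF W] by simp_all
qed

lemma PW: "prob (EW t m) = (\<Sum>xs\<in>FF t m. wt (t + m) xs)"
proof -
  have e: "EW t m = {\<omega>\<in>space M. Wait t m (\<lambda>l. X l \<omega>) \<and> (\<lambda>_ _. True) (X (t + m) \<omega>) (X (Suc (t + m)) \<omega>)}"
    unfolding EW_def by simp
  have "prob (EW t m) = (\<Sum>xs\<in>FF t m. wt (t + m) xs * (\<Sum>s\<in>{s\<in>SS. True}. jp (xs (t + m)) s))"
    using PR[of t m "\<lambda>_ _. True"] EW_sets[of t m] unfolding e by simp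
  also have "\<dots> = (\<Sum>xs\<in>FF t m. wt (t + m) xs)"
  proof (rule sum.cong[OF refl])
    fix xs assume "xs \<in> FF t m"
    then show "wt (t + m) xs * (\<Sum>s\<in>{s\<in>SS. True}. jp (xs (t + m)) s) = wt (t + m) xs"
      using jp_row[OF FF_props(1)] by simp
  qed
  finally show ?thesis .
qed

lemma PU: "prob (EU t m) = (\<Sum>xs\<in>FF t m. wt (t + m) xs * upP (xs (t + m)))"
proof -
  have e: "EU t m = {\<omega>\<in>space M. Wait t m (\<lambda>l. X l \<omega>) \<and> (\<lambda>a b. b 1 = Suc (a 1)) (X (t + m) \<omega>) (X (Suc (t + m)) \<omega>)}"
    unfolding EU_def Up_def by simp
  show ?thesis using PR[of t m "\<lambda>a b. b 1 = Suc (a 1)"] EU_sets[of t m] unfolding e upP_def by simp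
qed

lemma PD: "prob (ED t m) = (\<Sum>xs\<in>FF t m. wt (t + m) xs * dnP (xs (t + m)))"
proof -
  have e: "ED t m = {\<omega>\<in>space M. Wait t m (\<lambda>l. X l \<omega>) \<and> (\<lambda>a b. b 1 = a 1 - 1) (X (t + m) \<omega>) (X (Suc (t + m)) \<omega>)}"
    unfolding ED_def Dn_def by simp
  show ?thesis using PR[of t m "\<lambda>a b. b 1 = a 1 - 1"] ED_sets[of t m] unfolding e dnP_def by simp
qed

lemma PS: "prob (EW t (Suc m)) = (\<Sum>xs\<in>FF t m. wt (t + m) xs * stP (xs (t + m)))"
proof -
  have e: "EW t (Suc m) = {\<omega>\<in>space M. Wait t m (\<lambda>l. X l \<omega>) \<and> (\<lambda>a b. b 1 = a 1) (X (t + m) \<omega>) (X (Suc (t + m)) \<omega>)}"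
    unfolding EW_def Wait_Suc by simp
  show ?thesis using PR[of t m "\<lambda>a b. b 1 = a 1"] EW_sets[of t "Suc m"] unfolding e stP_def by simp
qed


definition delta where "delta = Min (insert 1 (upP ` {s\<in>SS. 0 < s 1 \<and> s 1 \<noteq> N}))"

lemma delta_fin: "finite (insert 1 (upP ` {s\<in>SS. 0 < s 1 \<and> s 1 \<noteq> N}))"
  using finite_SS by simp

lemma delta_pos: "0 < delta"
  unfolding delta_def using delta_fin upP_pos by (simp add: Min_gr_iff)

lemma delta_le1: "delta \<le> 1"
  unfolding delta_def using delta_fin by (intro Min_le) auto

lemma delta_le: "s \<in> SS \<Longrightarrow> 0 < s 1 \<Longrightarrow> s 1 \<noteq> N \<Longrightarrow> delta \<le> upP s"
  unfolding delta_def using delta_fin by (intro Min_le) auto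

lemma step_eq: "prob (EW t m) = prob (EU t m) + prob (ED t m) + prob (EW t (Suc m))"
proof -
  have "prob (EW t m) = (\<Sum>xs\<in>FF t m. wt (t + m) xs * (upP (xs (t + m)) + dnP (xs (t + m)) + stP (xs (t + m))))"
    unfolding PW
  proof (rule sum.cong[OF refl])
    fix xs assume xs: "xs \<in> FF t m"
    have "upP (xs (t + m)) + dnP (xs (t + m)) + stP (xs (t + m)) = 1"
      using split3[OF FF_props(1)[OF xs]] FF_props(2)[OF xs] by simp
    then show "wt (t + m) xs = wt (t + m) xs * (upP (xs (t + m)) + dnP (xs (t + m)) + stP (xs (t + m)))"
      by simp
  qed
  also have "\<dots> = prob (EU t m) + prob (ED t m) + prob (EW t (Suc m))"
    unfolding PU PD PS by (simp add: distrib_left sum.distrib)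
  finally show ?thesis .
qed

lemma step_le: "prob (EW t (Suc m)) \<le> (1 - delta) * prob (EW t m)"
proof -
  have "prob (EW t (Suc m)) \<le> (\<Sum>xs\<in>FF t m. wt (t + m) xs * (1 - delta))"
    unfolding PS
  proof (rule sum_mono)
    fix xs assume xs: "xs \<in> FF t m"
    have "upP (xs (t + m)) + dnP (xs (t + m)) + stP (xs (t + m)) = 1"
      using split3[OF FF_props(1)[OF xs]] FF_props(2)[OF xs] by simp
    moreover have "delta \<le> upP (xs (t + m))"
      using delta_le[OF FF_props(1)[OF xs]] FF_props(2,3)[OF xs] by simp
    moreover have "0 \<le> dnP (xs (t + m))" by (rule dnP_nonneg)
    ultimately have "stP (xs (t + m)) \<le> 1 - delta" by linarith
    then show "wt (t + m) xs * stP (xs (t + m)) \<le> wt (t + m) xs * (1 - delta)"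
      using wt_nonneg by (rule mult_left_mono)
  qed
  also have "\<dots> = (1 - delta) * prob (EW t m)"
    unfolding PW by (simp add: sum_distrib_left mult.commute)
  finally show ?thesis .
qed

lemma step_ratio: "p 1 * prob (ED t m) \<le> p 2 * prob (EU t m)"
proof -
  have "p 1 * prob (ED t m) = (\<Sum>xs\<in>FF t m. wt (t + m) xs * (p 1 * dnP (xs (t + m))))"
    unfolding PD by (simp add: sum_distrib_left mult.left_commute)
  also have "\<dots> \<le> (\<Sum>xs\<in>FF t m. wt (t + m) xs * (p 2 * upP (xs (t + m))))"
  proof (rule sum_mono)
    fix xs assume xs: "xs \<in> FF t m"
    have "p 1 * dnP (xs (t + m)) \<le> p 2 * upP (xs (t + m))"
      using ratioP[OF FF_props(1)[OF xs]] FF_props(2)[OF xs] by simp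
    then show "wt (t + m) xs * (p 1 * dnP (xs (t + m))) \<le> wt (t + m) xs * (p 2 * upP (xs (t + m)))"
      using wt_nonneg by (rule mult_left_mono)
  qed
  also have "\<dots> = p 2 * prob (EU t m)"
    unfolding PU by (simp add: sum_distrib_left mult.left_commute)
  finally show ?thesis .
qed

lemma tele: "prob (EW t 0) - prob (EW t M') = (\<Sum>m<M'. prob (EU t m) + prob (ED t m))"
proof (induction M')
  case 0 then show ?case by simp
next
  case (Suc M')
  then show ?case using step_eq[of t M'] by simp
qed

lemma decay: "prob (EW t M') \<le> (1 - delta) ^ M' * prob (EW t 0)"
proof (induction M')
  case 0 then show ?case by simp
next
  case (Suc M')
  have "prob (EW t (Suc M')) \<le> (1 - delta) * prob (EW t M')" by (rule step_le)
  also have "\<dots> \<le> (1 - delta) * ((1 - delta) ^ M' * prob (EW t 0))"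
    using Suc.IH delta_le1 by (intro mult_left_mono) auto
  finally show ?case by (simp add: mult.assoc)
qed

lemma EW_lim: "(\<lambda>M'. prob (EW t M')) \<longlonglongrightarrow> 0"
proof (rule tendsto_sandwich[where f="\<lambda>_. 0" and h="\<lambda>M'. (1 - delta) ^ M' * prob (EW t 0)"])
  show "\<forall>\<^sub>F M' in sequentially. 0 \<le> prob (EW t M')" by simp
  show "\<forall>\<^sub>F M' in sequentially. prob (EW t M') \<le> (1 - delta) ^ M' * prob (EW t 0)"
    using decay by simp
  show "(\<lambda>_. 0) \<longlonglongrightarrow> (0::real)" by simp
  have "(\<lambda>M'. (1 - delta) ^ M') \<longlonglongrightarrow> 0"
    using delta_pos delta_le1 by (intro LIMSEQ_power_zero) auto
  then show "(\<lambda>M'. (1 - delta) ^ M' * prob (EW t 0)) \<longlonglongrightarrow> 0"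
    by (rule tendsto_mult_left_zero)
qed

lemma UD_sums: "(\<lambda>m. prob (EU t m) + prob (ED t m)) sums prob (EW t 0)"
proof -
  have "(\<lambda>M'. prob (EW t 0) - prob (EW t M')) \<longlonglongrightarrow> prob (EW t 0) - 0"
    by (intro tendsto_diff tendsto_const EW_lim)
  then show ?thesis unfolding sums_def tele by simp
qed


lemma Up_le: assumes U: "Up t m x" and W: "Wait t m' x" shows "m' \<le> m"
proof (rule ccontr)
  assume "\<not> m' \<le> m"
  then have "Suc (t + m) \<le> t + m'" by simp
  then have a: "x (Suc (t + m)) 1 = x t 1" by (intro Wait_val[OF W]) simp_all
  have WU: "Wait t m x" using U unfolding Up_def by blast
  have b: "x (t + m) 1 = x t 1" by (rule Wait_val[OF WU]) simp_all
  have "x (Suc (t + m)) 1 = Suc (x (t + m) 1)" using U unfolding Up_def by blast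
  then show False using a b by simp
qed

lemma Dn_le: assumes U: "Dn t m x" and W: "Wait t m' x" shows "m' \<le> m"
proof (rule ccontr)
  assume "\<not> m' \<le> m"
  then have "Suc (t + m) \<le> t + m'" by simp
  then have a: "x (Suc (t + m)) 1 = x t 1" by (intro Wait_val[OF W]) simp_all
  have WU: "Wait t m x" using U unfolding Dn_def by blast
  have b: "x (t + m) 1 = x t 1" by (rule Wait_val[OF WU]) simp_all
  have nz: "x t 1 \<noteq> 0" using Wait_nz[OF WU] by blast
  have "x (Suc (t + m)) 1 = x (t + m) 1 - 1" using U unfolding Dn_def by blast
  then show False using a b nz by simp
qed

lemma Wait_t_eq: "Wait t m x \<Longrightarrow> Wait t' m' x \<Longrightarrow> t = t'"
  using Wait_ct[of t m x] Wait_ct[of t' m' x] by simp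

lemma disj_EU: "disjoint_family (EU t)"
  unfolding disjoint_family_on_def
proof (intro ballI impI)
  fix m m' :: nat assume "m \<noteq> m'"
  show "EU t m \<inter> EU t m' = {}"
  proof (rule ccontr)
    assume "EU t m \<inter> EU t m' \<noteq> {}"
    then obtain \<omega> where a: "Up t m (\<lambda>l. X l \<omega>)" and b: "Up t m' (\<lambda>l. X l \<omega>)" unfolding EU_def by blast
    have "m' \<le> m" using Up_le[OF a] b unfolding Up_def by blast
    moreover have "m \<le> m'" using Up_le[OF b] a unfolding Up_def by blast
    ultimately show False using \<open>m \<noteq> m'\<close> by simp
  qed
qed

lemma disj_ED: "disjoint_family (ED t)"
  unfolding disjoint_family_on_def
proof (intro ballI impI)
  fix m m' :: nat assume "m \<noteq> m'"
  show "ED t m \<inter> ED t m' = {}"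
  proof (rule ccontr)
    assume "ED t m \<inter> ED t m' \<noteq> {}"
    then obtain \<omega> where a: "Dn t m (\<lambda>l. X l \<omega>)" and b: "Dn t m' (\<lambda>l. X l \<omega>)" unfolding ED_def by blast
    have "m' \<le> m" using Dn_le[OF a] b unfolding Dn_def by blast
    moreover have "m \<le> m'" using Dn_le[OF b] a unfolding Dn_def by blast
    ultimately show False using \<open>m \<noteq> m'\<close> by simp
  qed
qed

definition EUt where "EUt t = (\<Union>m. EU t m)"
definition EDt where "EDt t = (\<Union>m. ED t m)"

lemma EUt_sets: "EUt t \<in> events" unfolding EUt_def using EU_sets by (intro sets.countable_UN) auto
lemma EDt_sets: "EDt t \<in> events" unfolding EDt_def using ED_sets by (intro sets.countable_UN) auto

lemma EU_sums: "(\<lambda>m. prob (EU t m)) sums prob (EUt t)"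
  unfolding EUt_def using EU_sets disj_EU by (intro finite_measure_UNION) auto
lemma ED_sums: "(\<lambda>m. prob (ED t m)) sums prob (EDt t)"
  unfolding EDt_def using ED_sets disj_ED by (intro finite_measure_UNION) auto

lemma t_eq: "prob (EUt t) + prob (EDt t) = prob (EW t 0)"
  using sums_add[OF EU_sums ED_sums] UD_sums sums_unique2 by blast

lemma t_ratio: "p 1 * prob (EDt t) \<le> p 2 * prob (EUt t)"
  by (rule sums_le[OF step_ratio sums_mult[OF ED_sums] sums_mult[OF EU_sums]])

lemma disj_t: assumes "\<And>t \<omega>. \<omega> \<in> A t \<Longrightarrow> \<exists>m. Wait t m (\<lambda>l. X l \<omega>)" shows "disjoint_family A"
  unfolding disjoint_family_on_def
proof (intro ballI impI)
  fix t t' :: nat assume "t \<noteq> t'"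
  show "A t \<inter> A t' = {}"
  proof (rule ccontr)
    assume "A t \<inter> A t' \<noteq> {}"
    then obtain \<omega> where "\<omega> \<in> A t" "\<omega> \<in> A t'" by blast
    then obtain m m' where "Wait t m (\<lambda>l. X l \<omega>)" "Wait t' m' (\<lambda>l. X l \<omega>)" using assms by blast
    then show False using Wait_t_eq \<open>t \<noteq> t'\<close> by blast
  qed
qed

definition AU where "AU = (\<Union>t. EUt t)"
definition AD where "AD = (\<Union>t. EDt t)"
definition AA where "AA = (\<Union>t. EW t 0)"

lemma AU_sums: "(\<lambda>t. prob (EUt t)) sums prob AU"
proof -
  have "disjoint_family EUt"
    by (rule disj_t) (auto simp: EUt_def EU_def Up_def)
  then show ?thesis unfolding AU_def using EUt_sets by (intro finite_measure_UNION) auto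
qed

lemma AD_sums: "(\<lambda>t. prob (EDt t)) sums prob AD"
proof -
  have "disjoint_family EDt"
    by (rule disj_t) (auto simp: EDt_def ED_def Dn_def)
  then show ?thesis unfolding AD_def using EDt_sets by (intro finite_measure_UNION) auto
qed

lemma AA_sums: "(\<lambda>t. prob (EW t 0)) sums prob AA"
proof -
  have "disjoint_family (\<lambda>t. EW t 0)"
    by (rule disj_t) (auto simp: EW_def)
  then show ?thesis unfolding AA_def using EW_sets by (intro finite_measure_UNION) auto
qed

lemma A_eq: "prob AU + prob AD = prob AA"
proof -
  have "(\<lambda>t. prob (EUt t) + prob (EDt t)) sums (prob AU + prob AD)" by (rule sums_add[OF AU_sums AD_sums])
  then have "(\<lambda>t. prob (EW t 0)) sums (prob AU + prob AD)" unfolding t_eq .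
  then show ?thesis using AA_sums sums_unique2 by blast
qed

lemma A_ratio: "p 1 * prob AD \<le> p 2 * prob AU"
  by (rule sums_le[OF t_ratio sums_mult[OF AD_sums] sums_mult[OF AU_sums]])


lemma Wproc_Some: "Wproc x j = Some w \<longleftrightarrow> (\<exists>t. change_time x j = Some t \<and> x t 1 = w)"
  unfolding Wproc_def by auto

lemma pA: "(\<exists>w. Wproc x k = Some w \<and> w \<noteq> 0 \<and> w \<noteq> N) \<longleftrightarrow> (\<exists>t. Wait t 0 x)"
proof
  assume "\<exists>w. Wproc x k = Some w \<and> w \<noteq> 0 \<and> w \<noteq> N"
  then obtain t where t: "change_time x k = Some t" "x t 1 \<noteq> 0" "x t 1 \<noteq> N" unfolding Wproc_Some by blast
  have "Wait t 0 x" by (rule Wait_intro[OF t]) simp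
  then show "\<exists>t. Wait t 0 x" by blast
next
  assume "\<exists>t. Wait t 0 x"
  then obtain t where W: "Wait t 0 x" by blast
  then show "\<exists>w. Wproc x k = Some w \<and> w \<noteq> 0 \<and> w \<noteq> N"
    using Wait_ct[OF W] Wait_nz[OF W] unfolding Wproc_Some by blast
qed

lemma pUD:
  assumes f: "f = (\<lambda>w. w + 1) \<or> f = (\<lambda>w. w - 1)"
  and fne: "\<And>w. w \<noteq> 0 \<Longrightarrow> f w \<noteq> w"
  shows "(\<exists>w. Wproc x k = Some w \<and> w \<noteq> 0 \<and> w \<noteq> N \<and> Wproc x (Suc k) = Some (f w)) \<longleftrightarrow>
    (\<exists>t m. Wait t m x \<and> x (Suc (t + m)) 1 = f (x (t + m) 1))"
proof
  assume "\<exists>w. Wproc x k = Some w \<and> w \<noteq> 0 \<and> w \<noteq> N \<and> Wproc x (Suc k) = Some (f w)"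
  then obtain t l where t: "change_time x k = Some t" "x t 1 \<noteq> 0" "x t 1 \<noteq> N"
    and l: "change_time x (Suc k) = Some l" "x l 1 = f (x t 1)"
    unfolding Wproc_Some by blast
  have H: "t < l \<and> x l 1 \<noteq> x t 1 \<and> (\<forall>j. t \<le> j \<and> j < l \<longrightarrow> x j 1 = x t 1)"
    using l(1) ct_Suc_char[OF t(1)] by blast
  define m where "m = l - Suc t"
  have lm: "Suc (t + m) = l" unfolding m_def using H by simp
  have W: "Wait t m x"
  proof (rule Wait_intro[OF t])
    fix j assume "t \<le> j" "j \<le> t + m"
    moreover then have "j < l" using lm by simp
    ultimately show "x j 1 = x t 1" using H by blast
  qed
  have "x (t + m) 1 = x t 1" by (rule Wait_val[OF W]) simp_all
  then have "x (Suc (t + m)) 1 = f (x (t + m) 1)" using lm l(2) by simp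
  then show "\<exists>t m. Wait t m x \<and> x (Suc (t + m)) 1 = f (x (t + m) 1)" using W by blast
next
  assume "\<exists>t m. Wait t m x \<and> x (Suc (t + m)) 1 = f (x (t + m) 1)"
  then obtain t m where W: "Wait t m x" and e: "x (Suc (t + m)) 1 = f (x (t + m) 1)" by blast
  have ct: "change_time x k = Some t" by (rule Wait_ct[OF W])
  have nz: "x t 1 \<noteq> 0" "x t 1 \<noteq> N" using Wait_nz[OF W] by simp_all
  have e2: "x (t + m) 1 = x t 1" by (rule Wait_val[OF W]) simp_all
  have e3: "x (Suc (t + m)) 1 = f (x t 1)" using e e2 by simp
  have "t < Suc (t + m) \<and> x (Suc (t + m)) 1 \<noteq> x t 1 \<and> (\<forall>j. t \<le> j \<and> j < Suc (t + m) \<longrightarrow> x j 1 = x t 1)"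
  proof (intro conjI allI impI)
    show "t < Suc (t + m)" by simp
    show "x (Suc (t + m)) 1 \<noteq> x t 1" using e3 fne[OF nz(1)] by simp
    fix j assume j: "t \<le> j \<and> j < Suc (t + m)"
    then have "t \<le> j" "j \<le> t + m" by simp_all
    then show "x j 1 = x t 1" by (rule Wait_val[OF W])
  qed
  then have "change_time x (Suc k) = Some (Suc (t + m))" using ct_Suc_char[OF ct] by blast
  then have "Wproc x (Suc k) = Some (f (x t 1))" unfolding Wproc_Some using e3 by blast
  moreover have "Wproc x k = Some (x t 1)" unfolding Wproc_Some using ct by blast
  ultimately show "\<exists>w. Wproc x k = Some w \<and> w \<noteq> 0 \<and> w \<noteq> N \<and> Wproc x (Suc k) = Some (f w)"
    using nz by blast
qed

lemma SA_eq: "{\<omega> \<in> space M. \<exists>w. Wproc (\<lambda>l. X l \<omega>) k = Some w \<and> w \<noteq> 0 \<and> w \<noteq> N} = AA"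
  unfolding AA_def EW_def using pA by blast

lemma SU_eq: "{\<omega> \<in> space M. \<exists>w. Wproc (\<lambda>l. X l \<omega>) k = Some w \<and> w \<noteq> 0 \<and> w \<noteq> N
              \<and> Wproc (\<lambda>l. X l \<omega>) (Suc k) = Some (w + 1)} = AU"
proof -
  have "\<And>x. (\<exists>w. Wproc x k = Some w \<and> w \<noteq> 0 \<and> w \<noteq> N \<and> Wproc x (Suc k) = Some (w + 1)) \<longleftrightarrow>
    (\<exists>t m. Up t m x)"
    unfolding Up_def using pUD[of "\<lambda>w. w + 1"] by simp
  then show ?thesis unfolding AU_def EUt_def EU_def by blast
qed

lemma SD_eq: "{\<omega> \<in> space M. \<exists>w. Wproc (\<lambda>l. X l \<omega>) k = Some w \<and> w \<noteq> 0 \<and> w \<noteq> N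
              \<and> Wproc (\<lambda>l. X l \<omega>) (Suc k) = Some (w - 1)} = AD"
proof -
  have "\<And>x. (\<exists>w. Wproc x k = Some w \<and> w \<noteq> 0 \<and> w \<noteq> N \<and> Wproc x (Suc k) = Some (w - 1)) \<longleftrightarrow>
    (\<exists>t m. Dn t m x)"
    unfolding Dn_def using pUD[of "\<lambda>w. w - 1"] by simp
  then show ?thesis unfolding AD_def EDt_def ED_def by blast
qed

lemma main:
  "measure M {\<omega> \<in> space M. \<exists>w. Wproc (\<lambda>l. X l \<omega>) k = Some w \<and> w \<noteq> 0 \<and> w \<noteq> N
              \<and> Wproc (\<lambda>l. X l \<omega>) (Suc k) = Some (w + 1)}
         \<ge> p 1 / (p 1 + p 2) *
           measure M {\<omega> \<in> space M. \<exists>w. Wproc (\<lambda>l. X l \<omega>) k = Some w \<and> w \<noteq> 0 \<and> w \<noteq> N}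
       \<and> measure M {\<omega> \<in> space M. \<exists>w. Wproc (\<lambda>l. X l \<omega>) k = Some w \<and> w \<noteq> 0 \<and> w \<noteq> N
              \<and> Wproc (\<lambda>l. X l \<omega>) (Suc k) = Some (w + 1)}
         + measure M {\<omega> \<in> space M. \<exists>w. Wproc (\<lambda>l. X l \<omega>) k = Some w \<and> w \<noteq> 0 \<and> w \<noteq> N
              \<and> Wproc (\<lambda>l. X l \<omega>) (Suc k) = Some (w - 1)}
         = measure M {\<omega> \<in> space M. \<exists>w. Wproc (\<lambda>l. X l \<omega>) k = Some w \<and> w \<noteq> 0 \<and> w \<noteq> N}"
  unfolding SA_eq SU_eq SD_eq
proof
  have pp: "0 < p 1 + p 2" using p1_pos p2_nonneg by simp
  have "p 1 * prob AA = p 1 * prob AU + p 1 * prob AD" by (simp add: A_eq[symmetric] distrib_left)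
  also have "\<dots> \<le> p 1 * prob AU + p 2 * prob AU" using A_ratio by simp
  finally have "p 1 * prob AA \<le> prob AU * (p 1 + p 2)" by (simp add: algebra_simps)
  then have "p 1 * prob AA / (p 1 + p 2) \<le> prob AU" using pp by (simp add: pos_divide_le_eq)
  then show "p 1 / (p 1 + p 2) * prob AA \<le> prob AU" by simp
  show "prob AU + prob AD = prob AA" by (rule A_eq)
qed

end

theorem lemma1:
  fixes N K :: nat and lam mu :: real and p :: "nat \<Rightarrow> real"
    and M :: "'w measure" and X :: "nat \<Rightarrow> 'w \<Rightarrow> (nat \<Rightarrow> nat)" and k :: nat
  assumes K2: "2 \<le> K"
    and p1: "p 1 \<le> 1" and p12: "p 2 < p 1"
    and pmono: "\<forall>i j. 2 \<le> i \<longrightarrow> i \<le> j \<longrightarrow> j \<le> K \<longrightarrow> p j \<le> p i"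
    and pK: "0 \<le> p K"
    and lam: "0 < lam" and mu: "0 < mu" "mu \<le> 1"
    and P: "prob_space M"
    and Xmeas: "\<forall>n. X n \<in> measurable M (count_space UNIV)"
    and Xlaw: "\<forall>n (xs :: nat \<Rightarrow> nat \<Rightarrow> nat).
       measure M {\<omega> \<in> space M. \<forall>i\<le>n. X i \<omega> = xs i}
       = (if xs 0 = init_state N then 1 else 0)
         * (\<Prod>i<n. jump_prob N K lam mu p (xs i) (xs (Suc i)))"
  shows "measure M {\<omega> \<in> space M. \<exists>w. Wproc (\<lambda>l. X l \<omega>) k = Some w \<and> w \<noteq> 0 \<and> w \<noteq> N
              \<and> Wproc (\<lambda>l. X l \<omega>) (Suc k) = Some (w + 1)}
         \<ge> p 1 / (p 1 + p 2) *
           measure M {\<omega> \<in> space M. \<exists>w. Wproc (\<lambda>l. X l \<omega>) k = Some w \<and> w \<noteq> 0 \<and> w \<noteq> N}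
       \<and> measure M {\<omega> \<in> space M. \<exists>w. Wproc (\<lambda>l. X l \<omega>) k = Some w \<and> w \<noteq> 0 \<and> w \<noteq> N
              \<and> Wproc (\<lambda>l. X l \<omega>) (Suc k) = Some (w + 1)}
         + measure M {\<omega> \<in> space M. \<exists>w. Wproc (\<lambda>l. X l \<omega>) k = Some w \<and> w \<noteq> 0 \<and> w \<noteq> N
              \<and> Wproc (\<lambda>l. X l \<omega>) (Suc k) = Some (w - 1)}
         = measure M {\<omega> \<in> space M. \<exists>w. Wproc (\<lambda>l. X l \<omega>) k = Some w \<and> w \<noteq> 0 \<and> w \<noteq> N}"
proof -
  interpret psetup N K lam mu p M X k
    unfolding psetup_def psetup_axioms_def rsetup_def by (intro conjI; (rule assms)?)
  show ?thesis by (rule main)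
qed

end
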